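(* For all logarithmic hypermonomials $\mathfrak{m},\mathfrak{n}\in\mathfrak{L}$: (i) $(\mathfrak{m}\mathfrak{n})^\dagger=\mathfrak{m}^\dagger+\mathfrak{n}^\dagger$, and $(\mathfrak{m}^t)^\dagger=t\mathfrak{m}^\dagger$ for $t\in\mathbb{R}$; (ii) $(\mathfrak{m}\mathfrak{n})'=\mathfrak{m}'\mathfrak{n}+\mathfrak{m}\mathfrak{n}'$; (iii) if $\mathfrak{m}\ne1$ then $\mathfrak{m}'\neq0$ and $\mathfrak{m}^\dagger\ne0$; (iv) if $\mathfrak{m}\prec1$ and $\mathfrak{n}\ne1$ then $\mathfrak{m}'\prec\mathfrak{n}^\dagger$; (v) if $\mathfrak{m}\prec\mathfrak{n}\ne1$ then $\mathfrak{m}'\prec\mathfrak{n}'$; (vi) if $\mathfrak{m}\in\mathfrak{L}_{<\alpha}$ then $\operatorname{supp}\mathfrak{m}'\subseteq\{\ell_\beta^\dagger:\beta<\alpha\}\,\mathfrak{m}$.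
   Context: Fix distinct symbols $\ell_\alpha$ for all ordinals. Exponent sequences $r=(r_\beta)$: reals over all ordinals, zero beyond some ordinal; monomials $\ell^r=\prod\ell_\beta^{r_\beta}$ form the abelian group $\mathfrak{L}$ ($\ell^r\ell^s=\ell^{r+s}$, $(\ell^r)^t=\ell^{tr}$), totally ordered by $\ell^r\prec\ell^s$ iff $r\ne s$ and $r_\beta<s_\beta$ at the least differing $\beta$; $\ell_\alpha$ has exponent $1$ at $\alpha$, else $0$. $\mathfrak{L}_{<\alpha}$: monomials with $r_\beta=0$ for $\beta\ge\alpha$. $\mathbb{L}_{<\alpha}=\mathbb{R}[[\mathfrak{L}_{<\alpha}]]$ is the Hahn field of real series over $\mathfrak{L}_{<\alpha}$ with well-based support, $\mathbb{L}=\bigcup\mathbb{L}_{<\alpha}$; for $f,g\in\mathbb{L}$, $f\prec g$ iff the largest monomial of $\operatorname{supp}f$ is $\prec$ that of $\operatorname{supp}g$ (with $0$ below all monomials). Define $\ell_\beta^\dagger=\prod_{\gamma\le\beta}\ell_\gamma^{-1}$ and for $\mathfrak{m}=\ell^r$: $\mathfrak{m}^\dagger=\sum_\beta r_\beta\ell_\beta^\dagger\in\mathbb{L}$ and $\mathfrak{m}'=\mathfrak{m}\,\mathfrak{m}^\dagger\in\mathbb{L}$. *)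

theory Defs
  imports Complex_Main
begin

text \<open>Ordinals are modelled by an arbitrary well-ordered type 'o; a logarithmic
hypermonomial ell^r is represented by its exponent sequence r :: 'o => real.\<close>

type_synonym 'o lmono = "'o \<Rightarrow> real"
type_synonym 'o lser = "'o lmono \<Rightarrow> real"

definition lm_one :: "'o lmono" where
  "lm_one = (\<lambda>_. 0)"

definition lm_mult :: "'o lmono \<Rightarrow> 'o lmono \<Rightarrow> 'o lmono" where
  "lm_mult r s = (\<lambda>\<beta>. r \<beta> + s \<beta>)"

definition lm_pow :: "'o lmono \<Rightarrow> real \<Rightarrow> 'o lmono" where
  "lm_pow r t = (\<lambda>\<beta>. t * r \<beta>)"

definition lm_less :: "'o::wellorder lmono \<Rightarrow> 'o lmono \<Rightarrow> bool" where
  "lm_less r s \<longleftrightarrow> r \<noteq> s \<and>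
     r (LEAST \<beta>. r \<beta> \<noteq> s \<beta>) < s (LEAST \<beta>. r \<beta> \<noteq> s \<beta>)"

definition lm_ell :: "'o \<Rightarrow> 'o lmono" where
  "lm_ell \<alpha> = (\<lambda>\<beta>. if \<beta> = \<alpha> then 1 else 0)"

definition lm_below :: "'o::wellorder \<Rightarrow> 'o lmono set" where
  "lm_below \<alpha> = {r. \<forall>\<beta>\<ge>\<alpha>. r \<beta> = 0}"

text \<open>ell_beta^dagger = prod_{gamma <= beta} ell_gamma^{-1}.\<close>
definition ell_dag :: "'o::wellorder \<Rightarrow> 'o lmono" where
  "ell_dag \<beta> = (\<lambda>\<gamma>. if \<gamma> \<le> \<beta> then -1 else 0)"

definition lsupp :: "'o lser \<Rightarrow> 'o lmono set" where
  "lsupp f = {m. f m \<noteq> 0}"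

definition well_based :: "'o::wellorder lmono set \<Rightarrow> bool" where
  "well_based S \<longleftrightarrow> \<not> (\<exists>g::nat \<Rightarrow> 'o lmono. (\<forall>n. g n \<in> S) \<and> (\<forall>n. lm_less (g n) (g (Suc n))))"

definition hahn :: "'o::wellorder lser set" where
  "hahn = {f. well_based (lsupp f)}"

definition ls_zero :: "'o lser" where
  "ls_zero = (\<lambda>_. 0)"

definition ls_add :: "'o lser \<Rightarrow> 'o lser \<Rightarrow> 'o lser" where
  "ls_add f g = (\<lambda>m. f m + g m)"

definition ls_scale :: "real \<Rightarrow> 'o lser \<Rightarrow> 'o lser" where
  "ls_scale t f = (\<lambda>m. t * f m)"

text \<open>Hahn series product (finite sums for well-based supports).\<close>
definition ls_mult :: "'o lser \<Rightarrow> 'o lser \<Rightarrow> 'o lser" where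
  "ls_mult f g = (\<lambda>n. \<Sum>p\<in>{p. f p \<noteq> 0 \<and> g (\<lambda>\<beta>. n \<beta> - p \<beta>) \<noteq> 0}.
                       f p * g (\<lambda>\<beta>. n \<beta> - p \<beta>))"

definition ls_mono :: "'o lmono \<Rightarrow> 'o lser" where
  "ls_mono m = (\<lambda>n. if n = m then 1 else 0)"

definition ls_lead :: "'o::wellorder lser \<Rightarrow> 'o lmono" where
  "ls_lead f = (THE m. m \<in> lsupp f \<and> (\<forall>n\<in>lsupp f. n = m \<or> lm_less n m))"

definition ls_less :: "'o::wellorder lser \<Rightarrow> 'o lser \<Rightarrow> bool" where
  "ls_less f g \<longleftrightarrow> g \<noteq> ls_zero \<and> (f = ls_zero \<or> lm_less (ls_lead f) (ls_lead g))"

text \<open>m^dagger = sum_beta r_beta ell_beta^dagger, coefficientwise (the ell_beta^dagger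
are pairwise distinct, so each coefficient is a sum over at most one beta).\<close>
definition lm_dag :: "'o::wellorder lmono \<Rightarrow> 'o lser" where
  "lm_dag r = (\<lambda>n. \<Sum>\<beta>\<in>{\<beta>. ell_dag \<beta> = n}. r \<beta>)"

definition lm_deriv :: "'o::wellorder lmono \<Rightarrow> 'o lser" where
  "lm_deriv m = ls_mult (ls_mono m) (lm_dag m)"

end

theory Submission
  imports Defs
begin

lemma less_iff:
  fixes r s :: "'o::wellorder lmono"
  shows "lm_less r s \<longleftrightarrow> (\<exists>\<delta>. (\<forall>\<gamma><\<delta>. r \<gamma> = s \<gamma>) \<and> r \<delta> < s \<delta>)"
proof
  assume a: "lm_less r s"
  then have "r \<noteq> s" and lt: "r (LEAST \<beta>. r \<beta> \<noteq> s \<beta>) < s (LEAST \<beta>. r \<beta> \<noteq> s \<beta>)"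
    unfolding lm_less_def by auto
  have "\<forall>\<gamma><(LEAST \<beta>. r \<beta> \<noteq> s \<beta>). r \<gamma> = s \<gamma>"
    using not_less_Least by blast
  with lt show "\<exists>\<delta>. (\<forall>\<gamma><\<delta>. r \<gamma> = s \<gamma>) \<and> r \<delta> < s \<delta>" by blast
next
  assume "\<exists>\<delta>. (\<forall>\<gamma><\<delta>. r \<gamma> = s \<gamma>) \<and> r \<delta> < s \<delta>"
  then obtain \<delta> where h: "\<forall>\<gamma><\<delta>. r \<gamma> = s \<gamma>" "r \<delta> < s \<delta>" by blast
  have "(LEAST \<beta>. r \<beta> \<noteq> s \<beta>) = \<delta>"
  proof (rule Least_equality)
    show "r \<delta> \<noteq> s \<delta>" using h by simp
    fix y assume "r y \<noteq> s y" then show "\<delta> \<le> y" using h by (meson not_le)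
  qed
  moreover have "r \<noteq> s" using h by auto
  ultimately show "lm_less r s" unfolding lm_less_def using h by simp
qed

lemma lm_less_asym:
  fixes r s :: "'o::wellorder lmono"
  shows "lm_less r s \<Longrightarrow> \<not> lm_less s r"
proof -
  assume "lm_less r s"
  moreover have "(\<lambda>\<beta>. r \<beta> \<noteq> s \<beta>) = (\<lambda>\<beta>. s \<beta> \<noteq> r \<beta>)"
    by auto
  then have "(LEAST \<beta>. r \<beta> \<noteq> s \<beta>) = (LEAST \<beta>. s \<beta> \<noteq> r \<beta>)"
    by simp
  ultimately show ?thesis unfolding lm_less_def by auto
qed

lemma lead_eq:
  fixes f :: "'o::wellorder lser"
  assumes "m \<in> lsupp f" "\<forall>n\<in>lsupp f. n = m \<or> lm_less n m"
  shows "ls_lead f = m"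
  unfolding ls_lead_def
proof (rule the_equality)
  show "m \<in> lsupp f \<and> (\<forall>n\<in>lsupp f. n = m \<or> lm_less n m)" using assms by blast
  fix x assume x: "x \<in> lsupp f \<and> (\<forall>n\<in>lsupp f. n = x \<or> lm_less n x)"
  show "x = m"
  proof (rule ccontr)
    assume "x \<noteq> m"
    then have "lm_less x m" "lm_less m x" using x assms by auto
    then show False using lm_less_asym by blast
  qed
qed

lemma ell_dag_inj:
  fixes a b :: "'o::wellorder"
  assumes "ell_dag a = ell_dag b" shows "a = b"
proof (rule ccontr)
  assume "a \<noteq> b"
  then consider "a < b" | "b < a" using linorder_neqE by blast
  then show False
  proof cases
    case 1
    have "ell_dag a b = ell_dag b b" using assms by simp
    moreover have "ell_dag a b = 0" using 1 by (simp add: ell_dag_def not_le)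
    moreover have "ell_dag b b = -1" by (simp add: ell_dag_def)
    ultimately show False by simp
  next
    case 2
    have "ell_dag a a = ell_dag b a" using assms by simp
    moreover have "ell_dag b a = 0" using 2 by (simp add: ell_dag_def not_le)
    moreover have "ell_dag a a = -1" by (simp add: ell_dag_def)
    ultimately show False by simp
  qed
qed

lemma dag_at: "lm_dag r (ell_dag \<beta>) = r \<beta>"
proof -
  have "{x. ell_dag x = ell_dag \<beta>} = {\<beta>}" using ell_dag_inj by blast
  then show ?thesis unfolding lm_dag_def by simp
qed

lemma dag_off: "(\<forall>\<beta>. x \<noteq> ell_dag \<beta>) \<Longrightarrow> lm_dag r x = 0"
  unfolding lm_dag_def by (metis (mono_tags, lifting) empty_Collect_eq sum.empty)

lemma dag_cases: "(\<exists>\<beta>. x = ell_dag \<beta> \<and> lm_dag r x = r \<beta>) \<or> lm_dag r x = 0"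
  using dag_at dag_off by metis

lemma mult_mono_left: "ls_mult (ls_mono m) g x = g (\<lambda>\<beta>. x \<beta> - m \<beta>)"
proof -
  have "{p. ls_mono m p \<noteq> 0 \<and> g (\<lambda>\<beta>. x \<beta> - p \<beta>) \<noteq> 0}
       = (if g (\<lambda>\<beta>. x \<beta> - m \<beta>) \<noteq> 0 then {m} else {})"
    unfolding ls_mono_def by auto
  then show ?thesis unfolding ls_mult_def ls_mono_def by auto
qed

lemma mult_mono_right: "ls_mult f (ls_mono n) x = f (\<lambda>\<beta>. x \<beta> - n \<beta>)"
proof -
  define c where "c = (\<lambda>\<beta>. x \<beta> - n \<beta>)"
  have e: "\<And>p. ((\<lambda>\<beta>. x \<beta> - p \<beta>) = n) = (p = c)"
    unfolding c_def fun_eq_iff by (metis add_diff_cancel_left' diff_add_cancel diff_diff_eq2)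
  have s: "{p. f p \<noteq> 0 \<and> ls_mono n (\<lambda>\<beta>. x \<beta> - p \<beta>) \<noteq> 0} = (if f c \<noteq> 0 then {c} else {})"
    unfolding ls_mono_def e by auto
  have "ls_mult f (ls_mono n) x = (if f c \<noteq> 0 then f c * ls_mono n (\<lambda>\<beta>. x \<beta> - c \<beta>) else 0)"
    unfolding ls_mult_def s by simp
  also have "(\<lambda>\<beta>. x \<beta> - c \<beta>) = n" using e by blast
  finally show ?thesis unfolding ls_mono_def c_def by simp
qed

lemma deriv_eq: "lm_deriv m x = lm_dag m (\<lambda>\<beta>. x \<beta> - m \<beta>)"
  unfolding lm_deriv_def by (rule mult_mono_left)

lemma deriv_at: "lm_deriv m (lm_mult (ell_dag \<beta>) m) = m \<beta>"
proof -
  have "(\<lambda>b. lm_mult (ell_dag \<beta>) m b - m b) = ell_dag \<beta>" by (simp add: lm_mult_def)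
  then show ?thesis by (simp add: deriv_eq dag_at)
qed

lemma deriv_cases: "(\<exists>\<beta>. x = lm_mult (ell_dag \<beta>) m \<and> lm_deriv m x = m \<beta>) \<or> lm_deriv m x = 0"
proof -
  from dag_cases[of "\<lambda>\<beta>. x \<beta> - m \<beta>" m] show ?thesis
  proof
    assume "\<exists>\<beta>. (\<lambda>\<beta>. x \<beta> - m \<beta>) = ell_dag \<beta> \<and> lm_dag m (\<lambda>\<beta>. x \<beta> - m \<beta>) = m \<beta>"
    then obtain \<beta> where b: "(\<lambda>\<beta>. x \<beta> - m \<beta>) = ell_dag \<beta>" "lm_dag m (\<lambda>\<beta>. x \<beta> - m \<beta>) = m \<beta>" by blast
    have "x = lm_mult (ell_dag \<beta>) m" using b(1) unfolding lm_mult_def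
      by (metis (no_types, lifting) diff_add_cancel ext)
    then show ?thesis using b by (intro disjI1 exI[of _ \<beta>] conjI) (simp_all add: deriv_eq)
  qed (simp add: deriv_eq)
qed

lemma part1: "lm_dag (lm_mult m n) = ls_add (lm_dag m) (lm_dag n)"
proof
  fix x show "lm_dag (lm_mult m n) x = ls_add (lm_dag m) (lm_dag n) x"
    unfolding lm_dag_def ls_add_def lm_mult_def by (rule sum.distrib)
qed

lemma part2: "lm_dag (lm_pow m t) = ls_scale t (lm_dag m)"
proof
  fix x show "lm_dag (lm_pow m t) x = ls_scale t (lm_dag m) x"
    unfolding lm_dag_def ls_scale_def lm_pow_def by (rule sum_distrib_left[symmetric])
qed

lemma part3: "lm_deriv (lm_mult m n) = ls_add (ls_mult (lm_deriv m) (ls_mono n)) (ls_mult (ls_mono m) (lm_deriv n))"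
proof
  fix x
  have e1: "(\<lambda>\<beta>. x \<beta> - lm_mult m n \<beta>) = (\<lambda>b. x b - n b - m b)"
    by (auto simp: lm_mult_def)
  have e2: "(\<lambda>\<beta>. x \<beta> - lm_mult m n \<beta>) = (\<lambda>b. x b - m b - n b)"
    by (auto simp: lm_mult_def)
  have "lm_deriv (lm_mult m n) x = lm_dag m (\<lambda>\<beta>. x \<beta> - lm_mult m n \<beta>) + lm_dag n (\<lambda>\<beta>. x \<beta> - lm_mult m n \<beta>)"
    unfolding deriv_eq part1 ls_add_def ..
  also have "\<dots> = lm_dag m (\<lambda>b. x b - n b - m b) + lm_dag n (\<lambda>b. x b - m b - n b)"
    unfolding e1[symmetric] e2[symmetric] ..
  also have "\<dots> = ls_add (ls_mult (lm_deriv m) (ls_mono n)) (ls_mult (ls_mono m) (lm_deriv n)) x"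
    unfolding ls_add_def mult_mono_left mult_mono_right deriv_eq ..
  finally show "lm_deriv (lm_mult m n) x = ls_add (ls_mult (lm_deriv m) (ls_mono n)) (ls_mult (ls_mono m) (lm_deriv n)) x" .
qed

lemma notone: "m \<noteq> lm_one \<Longrightarrow> \<exists>\<beta>. m \<beta> \<noteq> 0"
  unfolding lm_one_def by auto

lemma part4: "m \<noteq> lm_one \<Longrightarrow> lm_deriv m \<noteq> ls_zero \<and> lm_dag m \<noteq> ls_zero"
proof -
  assume "m \<noteq> lm_one"
  then obtain b where b: "m b \<noteq> 0" using notone by blast
  have "lm_deriv m (lm_mult (ell_dag b) m) \<noteq> 0" using b by (simp add: deriv_at)
  moreover have "lm_dag m (ell_dag b) \<noteq> 0" using b by (simp add: dag_at)
  ultimately show ?thesis unfolding ls_zero_def by (metis (no_types) fun_cong)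
qed

lemma disj_not: "A \<or> B \<Longrightarrow> \<not> B \<Longrightarrow> A" by blast

lemma supp_dag: "lsupp (lm_dag r) = {ell_dag \<beta> | \<beta>. r \<beta> \<noteq> 0}"
proof (intro equalityI subsetI)
  fix x assume "x \<in> lsupp (lm_dag r)"
  then have x: "lm_dag r x \<noteq> 0" by (simp add: lsupp_def)
  have "\<exists>\<beta>. x = ell_dag \<beta> \<and> lm_dag r x = r \<beta>" by (rule disj_not[OF dag_cases[of x r] x])
  then obtain \<beta> where b: "x = ell_dag \<beta>" "lm_dag r x = r \<beta>" by (elim exE conjE)
  have "r \<beta> \<noteq> 0" using x b(2) by simp
  then show "x \<in> {ell_dag \<beta> | \<beta>. r \<beta> \<noteq> 0}" using b(1) by (intro CollectI exI[of _ \<beta>] conjI)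
next
  fix x assume "x \<in> {ell_dag \<beta> | \<beta>. r \<beta> \<noteq> 0}"
  then obtain \<beta> where "x = ell_dag \<beta>" "r \<beta> \<noteq> 0" by (elim CollectE exE conjE)
  then show "x \<in> lsupp (lm_dag r)" by (simp add: lsupp_def dag_at)
qed

lemma supp_deriv: "lsupp (lm_deriv r) = {lm_mult (ell_dag \<beta>) r | \<beta>. r \<beta> \<noteq> 0}"
proof (intro equalityI subsetI)
  fix x assume "x \<in> lsupp (lm_deriv r)"
  then have x: "lm_deriv r x \<noteq> 0" by (simp add: lsupp_def)
  have "\<exists>\<beta>. x = lm_mult (ell_dag \<beta>) r \<and> lm_deriv r x = r \<beta>" by (rule disj_not[OF deriv_cases[of x r] x])
  then obtain \<beta> where b: "x = lm_mult (ell_dag \<beta>) r" "lm_deriv r x = r \<beta>" by (elim exE conjE)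
  have "r \<beta> \<noteq> 0" using x b(2) by simp
  then show "x \<in> {lm_mult (ell_dag \<beta>) r | \<beta>. r \<beta> \<noteq> 0}" using b(1) by (intro CollectI exI[of _ \<beta>] conjI)
next
  fix x assume "x \<in> {lm_mult (ell_dag \<beta>) r | \<beta>. r \<beta> \<noteq> 0}"
  then obtain \<beta> where "x = lm_mult (ell_dag \<beta>) r" "r \<beta> \<noteq> 0" by (elim CollectE exE conjE)
  then show "x \<in> lsupp (lm_deriv r)" by (simp add: lsupp_def deriv_at)
qed

lemma ell_less:
  fixes b0 b :: "'o::wellorder"
  assumes "b0 < b"
  shows "lm_less (lm_mult (ell_dag b) r) (lm_mult (ell_dag b0) r)"
proof -
  define d where "d = (LEAST g. b0 < g)"
  have d1: "b0 < d" unfolding d_def by (rule LeastI[of "\<lambda>g. b0 < g", OF assms])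
  have d2: "d \<le> b" unfolding d_def by (rule Least_le[of "\<lambda>g. b0 < g", OF assms])
  have d3: "\<forall>g<d. g \<le> b0" unfolding d_def using not_less_Least not_le by blast
  show ?thesis unfolding less_iff
    apply (rule exI[of _ d])
    using d1 d2 d3 unfolding lm_mult_def ell_dag_def by auto
qed

lemma lead_deriv:
  fixes r :: "'o::wellorder lmono"
  assumes "r \<noteq> lm_one"
  shows "ls_lead (lm_deriv r) = lm_mult (ell_dag (LEAST \<beta>. r \<beta> \<noteq> 0)) r"
proof (rule lead_eq)
  obtain b where b: "r b \<noteq> 0" using notone[OF assms] by blast
  have L: "r (LEAST \<beta>. r \<beta> \<noteq> 0) \<noteq> 0" by (rule LeastI[of _ b]) (use b in auto)
  show "lm_mult (ell_dag (LEAST \<beta>. r \<beta> \<noteq> 0)) r \<in> lsupp (lm_deriv r)"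
    unfolding supp_deriv using L by blast
  show "\<forall>n\<in>lsupp (lm_deriv r). n = lm_mult (ell_dag (LEAST \<beta>. r \<beta> \<noteq> 0)) r \<or>
          lm_less n (lm_mult (ell_dag (LEAST \<beta>. r \<beta> \<noteq> 0)) r)"
  proof
    fix n assume "n \<in> lsupp (lm_deriv r)"
    then obtain \<beta> where nb: "n = lm_mult (ell_dag \<beta>) r" "r \<beta> \<noteq> 0" unfolding supp_deriv by (elim CollectE exE conjE)
    have "(LEAST \<beta>. r \<beta> \<noteq> 0) \<le> \<beta>" using nb(2) by (rule Least_le)
    then show "n = lm_mult (ell_dag (LEAST \<beta>. r \<beta> \<noteq> 0)) r \<or>
          lm_less n (lm_mult (ell_dag (LEAST \<beta>. r \<beta> \<noteq> 0)) r)"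
      using ell_less[of "LEAST \<beta>. r \<beta> \<noteq> 0" \<beta> r] nb(1) by (cases "(LEAST \<beta>. r \<beta> \<noteq> 0) = \<beta>") auto
  qed
qed

lemma lead_dag:
  fixes r :: "'o::wellorder lmono"
  assumes "r \<noteq> lm_one"
  shows "ls_lead (lm_dag r) = ell_dag (LEAST \<beta>. r \<beta> \<noteq> 0)"
proof (rule lead_eq)
  obtain b where b: "r b \<noteq> 0" using notone[OF assms] by blast
  have L: "r (LEAST \<beta>. r \<beta> \<noteq> 0) \<noteq> 0" by (rule LeastI[of _ b]) (use b in auto)
  show "ell_dag (LEAST \<beta>. r \<beta> \<noteq> 0) \<in> lsupp (lm_dag r)"
    unfolding supp_dag using L by blast
  show "\<forall>n\<in>lsupp (lm_dag r). n = ell_dag (LEAST \<beta>. r \<beta> \<noteq> 0) \<or>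
          lm_less n (ell_dag (LEAST \<beta>. r \<beta> \<noteq> 0))"
  proof
    fix n assume "n \<in> lsupp (lm_dag r)"
    then obtain \<beta> where nb: "n = ell_dag \<beta>" "r \<beta> \<noteq> 0" unfolding supp_dag by (elim CollectE exE conjE)
    have "(LEAST \<beta>. r \<beta> \<noteq> 0) \<le> \<beta>" using nb(2) by (rule Least_le)
    moreover have "\<And>x::'o lmono. lm_mult x lm_one = x" by (simp add: lm_mult_def lm_one_def)
    ultimately show "n = ell_dag (LEAST \<beta>. r \<beta> \<noteq> 0) \<or>
          lm_less n (ell_dag (LEAST \<beta>. r \<beta> \<noteq> 0))"
      using ell_less[of "LEAST \<beta>. r \<beta> \<noteq> 0" \<beta> lm_one] nb(1) by (cases "(LEAST \<beta>. r \<beta> \<noteq> 0) = \<beta>") auto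
  qed
qed

lemma least_facts:
  fixes r :: "'o::wellorder lmono"
  assumes "r \<noteq> lm_one"
  shows "r (LEAST \<beta>. r \<beta> \<noteq> 0) \<noteq> 0" "\<forall>\<gamma><(LEAST \<beta>. r \<beta> \<noteq> 0). r \<gamma> = 0"
proof -
  obtain b where b: "r b \<noteq> 0" using notone[OF assms] by blast
  show "r (LEAST \<beta>. r \<beta> \<noteq> 0) \<noteq> 0" by (rule LeastI[of _ b]) (use b in auto)
  show "\<forall>\<gamma><(LEAST \<beta>. r \<beta> \<noteq> 0). r \<gamma> = 0" using not_less_Least by blast
qed

lemma less_one_neg:
  fixes m :: "'o::wellorder lmono"
  assumes "lm_less m lm_one"
  shows "m (LEAST \<beta>. m \<beta> \<noteq> 0) < 0"
  using assms unfolding lm_less_def lm_one_def by simp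

lemma next_facts:
  fixes b1 b0 :: "'o::wellorder"
  assumes lt0: "b1 < b0"
  defines "d \<equiv> LEAST g. b1 < g"
  shows "b1 < d" "d \<le> b0" "\<forall>g<d. g \<le> b1"
proof -
  show "b1 < d" unfolding d_def by (rule LeastI[of "\<lambda>g. b1 < g", OF lt0])
  show "d \<le> b0" unfolding d_def by (rule Least_le[of "\<lambda>g. b1 < g", OF lt0])
  show "\<forall>g<d. g \<le> b1" unfolding d_def using not_less_Least not_le by blast
qed

lemma part5:
  fixes m n :: "'o::wellorder lmono"
  assumes mlt: "lm_less m lm_one" and n1: "n \<noteq> lm_one"
  shows "ls_less (lm_deriv m) (lm_dag n)"
proof -
  have m1: "m \<noteq> lm_one" using mlt unfolding lm_less_def by blast
  define b0 where "b0 = (LEAST \<beta>. m \<beta> \<noteq> 0)"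
  define b1 where "b1 = (LEAST \<beta>. n \<beta> \<noteq> 0)"
  have neg: "m b0 < 0" using less_one_neg[OF mlt] b0_def by simp
  have mz: "\<forall>\<gamma><b0. m \<gamma> = 0" using least_facts(2)[OF m1] b0_def by simp
  have "lm_less (lm_mult (ell_dag b0) m) (ell_dag b1)"
  proof (cases "b0 \<le> b1")
    case True
    show ?thesis unfolding less_iff
      apply (rule exI[of _ b0])
      using True neg mz unfolding lm_mult_def ell_dag_def by auto
  next
    case False
    then have lt: "b1 < b0" by simp
    define d where "d = (LEAST g. b1 < g)"
    have d: "b1 < d" "d \<le> b0" "\<forall>g<d. g \<le> b1" using next_facts[OF lt] d_def by auto
    have md: "m d \<le> 0"
    proof (cases "d = b0")
      case True then show ?thesis using neg by simp
    next
      case False then show ?thesis using mz d(2) by simp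
    qed
    have "\<forall>g<d. g < b0" using d lt by auto
    then show ?thesis unfolding less_iff
      apply (intro exI[of _ d])
      using d md mz unfolding lm_mult_def ell_dag_def by (auto simp: not_le)
  qed
  then show ?thesis unfolding ls_less_def
    using part4[OF n1] lead_deriv[OF m1] lead_dag[OF n1] b0_def b1_def by simp
qed

lemma deriv_one: "lm_deriv (lm_one :: 'o::wellorder lmono) = ls_zero"
  by (rule ext) (simp add: deriv_eq lm_dag_def lm_one_def ls_zero_def)

lemma part6:
  fixes m n :: "'o::wellorder lmono"
  assumes mn: "lm_less m n" and n1: "n \<noteq> lm_one"
  shows "ls_less (lm_deriv m) (lm_deriv n)"
proof (cases "m = lm_one")
  case True
  then show ?thesis unfolding ls_less_def using part4[OF n1] by (simp add: deriv_one)
next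
  case m1: False
  define b0 where "b0 = (LEAST \<beta>. m \<beta> \<noteq> 0)"
  define b1 where "b1 = (LEAST \<beta>. n \<beta> \<noteq> 0)"
  have m0: "m b0 \<noteq> 0" and mz: "\<forall>\<gamma><b0. m \<gamma> = 0" using least_facts[OF m1] b0_def by simp_all
  have n0: "n b1 \<noteq> 0" and nz: "\<forall>\<gamma><b1. n \<gamma> = 0" using least_facts[OF n1] b1_def by simp_all
  obtain \<delta> where dl: "\<forall>\<gamma><\<delta>. m \<gamma> = n \<gamma>" "m \<delta> < n \<delta>" using mn unfolding less_iff by blast
  have "lm_less (lm_mult (ell_dag b0) m) (lm_mult (ell_dag b1) n)"
  proof (cases b0 b1 rule: linorder_cases)
    case less
    have "\<not> b0 < \<delta>" using dl(1) m0 nz less by auto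
    moreover have "\<not> \<delta> < b0" using dl(2) mz nz less by force
    ultimately have "\<delta> = b0" by simp
    then have neg: "m b0 < 0" using dl(2) nz less by simp
    show ?thesis unfolding less_iff
      apply (rule exI[of _ b0])
      using less neg mz nz unfolding lm_mult_def ell_dag_def by auto
  next
    case greater
    have "\<not> b1 < \<delta>" using dl(1) n0 mz greater by force
    moreover have "\<not> \<delta> < b1" using dl(2) mz nz greater by force
    ultimately have "\<delta> = b1" by simp
    then have pos: "n b1 > 0" using dl(2) mz greater by simp
    show ?thesis unfolding less_iff
      apply (rule exI[of _ b1])
      using greater pos mz nz unfolding lm_mult_def ell_dag_def by auto
  next
    case equal
    have "\<not> \<delta> < b0" using dl(2) mz nz equal by force
    then have "b0 \<le> \<delta>" by simp
    show ?thesis unfolding less_iff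
      apply (rule exI[of _ \<delta>])
      using equal dl unfolding lm_mult_def ell_dag_def by auto
  qed
  then show ?thesis unfolding ls_less_def
    using part4[OF n1] lead_deriv[OF m1] lead_deriv[OF n1] b0_def b1_def by simp
qed

lemma part7:
  fixes m :: "'o::wellorder lmono"
  assumes "m \<in> lm_below \<alpha>"
  shows "lsupp (lm_deriv m) \<subseteq> {lm_mult (ell_dag \<beta>) m | \<beta>. \<beta> < \<alpha>}"
proof
  fix x assume "x \<in> lsupp (lm_deriv m)"
  then obtain \<beta> where b: "x = lm_mult (ell_dag \<beta>) m" "m \<beta> \<noteq> 0" unfolding supp_deriv by (elim CollectE exE conjE)
  have "\<beta> < \<alpha>"
  proof (rule ccontr)
    assume "\<not> \<beta> < \<alpha>"
    then have "\<alpha> \<le> \<beta>" by simp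
    then have "m \<beta> = 0" using assms unfolding lm_below_def by simp
    then show False using b(2) by simp
  qed
  then show "x \<in> {lm_mult (ell_dag \<beta>) m | \<beta>. \<beta> < \<alpha>}" using b(1) by (intro CollectI exI[of _ \<beta>] conjI)
qed

theorem lemma3p1:
  fixes m n :: "'o::wellorder lmono" and t :: real and \<alpha> :: 'o
  shows
    "lm_dag (lm_mult m n) = ls_add (lm_dag m) (lm_dag n)
     \<and> lm_dag (lm_pow m t) = ls_scale t (lm_dag m)
     \<and> lm_deriv (lm_mult m n) = ls_add (ls_mult (lm_deriv m) (ls_mono n)) (ls_mult (ls_mono m) (lm_deriv n))
     \<and> (m \<noteq> lm_one \<longrightarrow> lm_deriv m \<noteq> ls_zero \<and> lm_dag m \<noteq> ls_zero)
     \<and> (lm_less m lm_one \<and> n \<noteq> lm_one \<longrightarrow> ls_less (lm_deriv m) (lm_dag n))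
     \<and> (lm_less m n \<and> n \<noteq> lm_one \<longrightarrow> ls_less (lm_deriv m) (lm_deriv n))
     \<and> (m \<in> lm_below \<alpha> \<longrightarrow> lsupp (lm_deriv m) \<subseteq> {lm_mult (ell_dag \<beta>) m | \<beta>. \<beta> < \<alpha>})"
  using part1[of m n] part2[of m t] part3[of m n] part4[of m] part5[of m n] part6[of m n] part7[of m \<alpha>]
  by (intro conjI impI) simp_all

end
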